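(* Let $\pi$ satisfy Conditions 1, 2 and 3($C$) with $p=p_n$, where $p_n/n\to0$, and fix $\alpha\in(0,1)$. If $X\sim\mathcal N(0,1)$, then as $n\to\infty$, $$\mathbb P(m_X\ge\alpha)\le 8\sqrt\pi\,\frac{C}{\alpha c}\,\frac{p_n}{n}\,(1+o(1)).$$
   Context: $\pi$ is a probability density on $(0,\infty)$ and $$m_x=\frac{\int_0^\infty u(1+u)^{-3/2}e^{\frac{x^2}{2}\frac{u}{1+u}}\pi(u)\,du}{\int_0^\infty (1+u)^{-1/2}e^{\frac{x^2}{2}\frac{u}{1+u}}\pi(u)\,du}.$$ Notation: $\tau_n(p)=p/n$, $\nu_n(p)=\sqrt{\log(n/p)}$, $s_n=\tau_n(p)\nu_n(p)^2$. Uniformly regularly varying at infinity: there exist $R,u_0>0$ with $1/R\le L(au)/L(u)\le R$ for all $a\in[1,2]$, $u\ge u_0$. Condition 1: for some $b\ge0$, $\pi(u)=L_n(u)e^{-bu}$, $L_n$ uniformly regularly varying with $R,u_0$ independent of $n$; constants $C',b'>0$, $K\ge0$, $u_*\ge1$ with $C'\pi(u)\ge\tau_n(p)^Ke^{-b'u}$ for $u\ge u_*$. Condition 2: $\int_0^1\pi(u)du\ge c>0$. Condition 3($C$): $\int_{s_n}^\infty\big(u\wedge\frac{\nu_n(p)^3}{\sqrt u}\big)\pi(u)du+\nu_n(p)\int_1^{\nu_n(p)^2}\frac{\pi(u)}{\sqrt u}du\le Cs_n$. *)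

theory Defs
  imports "HOL-Probability.Probability"
begin

definition tau_n :: "nat \<Rightarrow> real \<Rightarrow> real" where
  "tau_n n p = p / real n"

definition nu_n :: "nat \<Rightarrow> real \<Rightarrow> real" where
  "nu_n n p = sqrt (ln (real n / p))"

definition s_n :: "nat \<Rightarrow> real \<Rightarrow> real" where
  "s_n n p = tau_n n p * (nu_n n p)\<^sup>2"

definition is_density_pos :: "(real \<Rightarrow> real) \<Rightarrow> bool" where
  "is_density_pos \<pi> \<longleftrightarrow> (\<forall>u>0. \<pi> u \<ge> 0) \<and> set_integrable lborel {0<..} \<pi>
     \<and> (LBINT u:{0<..}. \<pi> u) = 1"

definition m_x :: "(real \<Rightarrow> real) \<Rightarrow> real \<Rightarrow> real" where
  "m_x \<pi> x =
     (LBINT u:{0<..}. u * (1 + u) powr (-3/2) * exp (x\<^sup>2 / 2 * (u / (1 + u))) * \<pi> u) /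
     (LBINT u:{0<..}. (1 + u) powr (-1/2) * exp (x\<^sup>2 / 2 * (u / (1 + u))) * \<pi> u)"

definition unif_reg_var :: "real \<Rightarrow> real \<Rightarrow> (real \<Rightarrow> real) \<Rightarrow> bool" where
  "unif_reg_var R u0 L \<longleftrightarrow>
     (\<forall>a\<in>{1..2}. \<forall>u\<ge>u0. 1 / R \<le> L (a * u) / L u \<and> L (a * u) / L u \<le> R)"

definition condition1 :: "(nat \<Rightarrow> real \<Rightarrow> real) \<Rightarrow> (nat \<Rightarrow> real) \<Rightarrow> bool" where
  "condition1 \<pi> p \<longleftrightarrow>
     (\<exists>b\<ge>0. \<exists>R>0. \<exists>u0>0. \<exists>C'>0. \<exists>b'>0. \<exists>K\<ge>0. \<exists>ustar\<ge>1.
       (\<forall>\<^sub>F n in sequentially.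
          (\<exists>L. (\<forall>u>0. \<pi> n u = L u * exp (- b * u)) \<and> unif_reg_var R u0 L) \<and>
          (\<forall>u\<ge>ustar. C' * \<pi> n u \<ge> tau_n n (p n) powr K * exp (- b' * u))))"

definition condition2 :: "(nat \<Rightarrow> real \<Rightarrow> real) \<Rightarrow> real \<Rightarrow> bool" where
  "condition2 \<pi> c \<longleftrightarrow> c > 0 \<and> (\<forall>\<^sub>F n in sequentially. (LBINT u:{0..1}. \<pi> n u) \<ge> c)"

definition condition3 :: "(nat \<Rightarrow> real \<Rightarrow> real) \<Rightarrow> (nat \<Rightarrow> real) \<Rightarrow> real \<Rightarrow> bool" where
  "condition3 \<pi> p C \<longleftrightarrow>
     (\<forall>\<^sub>F n in sequentially.
        (LBINT u:{s_n n (p n)..}. min u (nu_n n (p n) ^ 3 / sqrt u) * \<pi> n u)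
        + nu_n n (p n) * (LBINT u:{1..(nu_n n (p n))\<^sup>2}. \<pi> n u / sqrt u)
        \<le> C * s_n n (p n))"

end

theory Submission
  imports Defs "HOL-Real_Asymp.Real_Asymp"
begin


lemma gauss_half:
  fixes z :: real assumes z: "z > 0"
  shows "(\<integral>\<^sup>+x. ennreal (x / z * std_normal_density x) * indicator {z..} x \<partial>lborel)
         = ennreal (std_normal_density z / z)"
proof -
  have "(\<integral>\<^sup>+x. ennreal (x / z * std_normal_density x) * indicator {z..} x \<partial>lborel)
        = ennreal (0 - (- std_normal_density z / z))"
  proof (rule nn_integral_FTC_atLeast[where F="\<lambda>x. - std_normal_density x / z" and T=0])
    show "(\<lambda>x. x / z * std_normal_density x) \<in> borel_measurable borel" by measurable
    show "0 \<le> x / z * std_normal_density x" if "z \<le> x" for x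
      using that z by simp
    show "((\<lambda>x. - std_normal_density x / z) \<longlongrightarrow> 0) at_top"
    proof -
      have "((\<lambda>x::real. exp (- x\<^sup>2 / 2)) \<longlongrightarrow> 0) at_top" by real_asymp
      from tendsto_mult[OF tendsto_const this, of "- (1 / sqrt (2 * pi)) / z"]
      show ?thesis unfolding std_normal_density_def by (simp add: field_simps)
    qed
    show "DERIV (\<lambda>x. - std_normal_density x / z) x :> x / z * std_normal_density x" for x
      unfolding std_normal_density_def
      using z by (auto intro!: derivative_eq_intros simp: field_simps power2_eq_square)
  qed
  then show ?thesis by simp
qed

lemma gauss_tail:
  fixes z :: real assumes z: "z > 0"
  shows "measure (density lborel std_normal_density) {x. z \<le> \<bar>x\<bar>} \<le> 2 * std_normal_density z / z"
proof -
  let ?M = "density lborel std_normal_density"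
  let ?F = "\<lambda>x. ennreal (x / z * std_normal_density x) * indicator {z..} x"
  have P: "prob_space ?M" by (auto intro: prob_space_normal_density)
  have meas: "{x::real. z \<le> \<bar>x\<bar>} \<in> sets borel"
    by (rule borel_closed) (auto intro!: closed_Collect_le continuous_intros)
  have "emeasure ?M {x. z \<le> \<bar>x\<bar>} = (\<integral>\<^sup>+x. ennreal (std_normal_density x) * indicator {x. z \<le> \<bar>x\<bar>} x \<partial>lborel)"
    using meas by (subst emeasure_density) auto
  also have "\<dots> \<le> (\<integral>\<^sup>+x. ?F x + ?F (- x) \<partial>lborel)"
  proof (rule nn_integral_mono)
    fix x :: real
    show "ennreal (std_normal_density x) * indicator {x. z \<le> \<bar>x\<bar>} x \<le> ?F x + ?F (- x)"
    proof (cases "z \<le> x")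
      case True
      have "std_normal_density x \<le> x / z * std_normal_density x"
        using True z by (simp add: field_simps mult_right_mono)
      then show ?thesis using True z by (auto simp: indicator_def intro: add_increasing2 ennreal_leI)
    next
      case False
      show ?thesis
      proof (cases "x \<le> -z")
        case True
        have "std_normal_density x \<le> - x / z * std_normal_density (-x)"
        proof -
          have "z * exp (- (x\<^sup>2 / 2)) \<le> - x * exp (- (x\<^sup>2 / 2))"
            using True by (intro mult_right_mono) auto
          then show ?thesis using z by (simp add: field_simps std_normal_density_def)
        qed
        then show ?thesis using True False z by (auto simp: indicator_def intro: add_increasing ennreal_leI)
      next
        case False2: False
        then show ?thesis using False by (auto simp: indicator_def)
      qed
    qed
  qed
  also have "\<dots> = (\<integral>\<^sup>+x. ?F x \<partial>lborel) + (\<integral>\<^sup>+x. ?F (- x) \<partial>lborel)"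
    by (rule nn_integral_add) auto
  also have "(\<integral>\<^sup>+x. ?F (- x) \<partial>lborel) = (\<integral>\<^sup>+x. ?F x \<partial>lborel)"
    using nn_integral_real_affine[of ?F "-1" 0] by simp
  also have "(\<integral>\<^sup>+x. ?F x \<partial>lborel) = ennreal (std_normal_density z / z)"
    by (rule gauss_half[OF z])
  finally have "emeasure ?M {x. z \<le> \<bar>x\<bar>} \<le> ennreal (2 * std_normal_density z / z)"
    using z by (simp add: ennreal_plus[symmetric] del: ennreal_plus)
  then show ?thesis
    using z by (simp add: finite_measure.emeasure_eq_measure[OF prob_space.finite_measure[OF P]] ennreal_le_iff)
qed


lemma powr_m32: "y > 0 \<Longrightarrow> (y::real) powr (-3/2) = 1 / (y * sqrt y)"
proof -
  assume y: "y > 0"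
  have "y powr (3/2) = y powr 1 * y powr (1/2)" by (subst powr_add[symmetric]) simp
  also have "\<dots> = y * sqrt y" using y by (simp add: powr_half_sqrt)
  finally show ?thesis by (simp add: powr_minus_divide)
qed

lemma powr_m12: "y > 0 \<Longrightarrow> (y::real) powr (-1/2) = 1 / sqrt y"
  by (simp add: powr_minus_divide powr_half_sqrt)

lemma gN_le:
  fixes u \<nu> s Z x :: real
  assumes u: "u > 0" and nu: "\<nu> \<ge> 1" and s: "s > 0" and Z: "x\<^sup>2 \<le> Z" "0 \<le> Z"
  shows "u * (1 + u) powr (-3/2) * exp (x\<^sup>2 / 2 * (u / (1 + u)))
    \<le> s * exp (Z * s / 2) + (exp (Z/4) + exp (Z/2) / \<nu>^3) * (indicator {s..} u * min u (\<nu>^3 / sqrt u))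
       + exp (Z/2) * (indicator {1..\<nu>\<^sup>2} u / sqrt u)"
proof -
  define q where "q = u * (1 + u) powr (-3/2)"
  have q: "q = u / ((1+u) * sqrt (1+u))" using u powr_m32[of "1+u"] by (simp add: q_def)
  have sq1: "sqrt (1+u) \<ge> 1" using u by simp
  have q1: "q \<le> u"
  proof -
    have "(1+u) * sqrt (1+u) \<ge> 1" using u sq1 mult_mono[of 1 "1+u" 1 "sqrt (1+u)"] by simp
    then show ?thesis unfolding q using u by (simp add: divide_le_eq mult_le_cancel_left1)
  qed
  have q2: "q \<le> 1 / sqrt u"
  proof -
    have le: "u * sqrt u \<le> (1+u) * sqrt (1+u)" using u by (intro mult_mono) auto
    have "q \<le> u / (u * sqrt u)" unfolding q
      by (rule divide_left_mono[OF le]) (use u in auto)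
    also have "u / (u * sqrt u) = 1 / sqrt u" using u by simp
    finally show ?thesis .
  qed
  have q0: "q \<ge> 0" unfolding q using u by simp
  have frac: "0 \<le> u / (1+u)" "u / (1+u) \<le> 1" "u / (1+u) \<le> u" using u by (auto simp: divide_simps)
  have e1: "exp (x\<^sup>2 / 2 * (u / (1 + u))) \<le> exp (Z / 2 * (u / (1 + u)))"
    using Z frac by (intro exp_le_cancel_iff[THEN iffD2] mult_right_mono) auto
  have e2: "exp (x\<^sup>2 / 2 * (u / (1 + u))) \<le> exp (Z/2)"
  proof -
    have "x\<^sup>2/2*(u/(1+u)) \<le> x\<^sup>2/2" by (rule mult_left_le) (use frac in auto)
    then have "x\<^sup>2/2*(u/(1+u)) \<le> Z/2" using Z by linarith
    then show ?thesis by simp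
  qed
  have t1: "0 \<le> (exp (Z/4) + exp (Z/2) / \<nu>^3) * (indicator {s..} u * min u (\<nu>^3 / sqrt u))"
    using u nu by (auto simp: indicator_def)
  have t2: "0 \<le> exp (Z/2) * (indicator {1..\<nu>\<^sup>2} u / sqrt u)"
    using u by (auto simp: indicator_def)
  have t0: "0 \<le> s * exp (Z * s / 2)" using s by simp
  let ?E = "exp (x\<^sup>2 / 2 * (u / (1 + u)))"
  have LHS: "u * (1 + u) powr (-3/2) * ?E = q * ?E" by (simp add: q_def)
  show ?thesis
  proof (cases "u < s")
    case True
    have "Z / 2 * (u / (1 + u)) \<le> Z / 2 * s" using frac True Z
      by (intro mult_left_mono) auto
    then have "Z / 2 * (u / (1 + u)) \<le> Z * s / 2" by simp
    then have "?E \<le> exp (Z * s / 2)" using e1 by (meson exp_le_cancel_iff order_trans)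
    then have "q * ?E \<le> s * exp (Z * s / 2)" using q1 q0 True by (intro mult_mono) auto
    then show ?thesis using t1 t2 using LHS by linarith
  next
    case False
    show ?thesis
    proof (cases "u \<le> 1")
      case True
      have "Z / 2 * (u / (1 + u)) \<le> Z / 4"
      proof -
        have "u / (1+u) \<le> 1/2" using True u by (simp add: divide_simps)
        then have "Z / 2 * (u / (1 + u)) \<le> Z / 2 * (1/2)" using Z by (intro mult_left_mono) auto
        then show ?thesis by simp
      qed
      then have "?E \<le> exp (Z / 4)" using e1 by (meson exp_le_cancel_iff order_trans)
      then have a: "q * ?E \<le> u * exp (Z / 4)" using q1 q0 by (intro mult_mono) auto
      have "sqrt u \<le> 1" using True by simp
      have "1 \<le> \<nu>^3" using nu by simp
      have "\<nu>^3 * sqrt u \<le> \<nu>^3" using \<open>sqrt u \<le> 1\<close> \<open>1 \<le> \<nu>^3\<close> u nu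
        by (intro mult_left_le) auto
      then have "\<nu>^3 \<le> \<nu>^3 / sqrt u" using u by (simp add: pos_le_divide_eq)
      then have "u \<le> \<nu>^3 / sqrt u" using True \<open>1 \<le> \<nu>^3\<close> by linarith
      then have m: "min u (\<nu>^3 / sqrt u) = u" by simp
      have "u * exp (Z / 4) \<le> (exp (Z/4) + exp (Z/2) / \<nu>^3) * (indicator {s..} u * min u (\<nu>^3 / sqrt u))"
        using False m u nu by (simp add: indicator_def algebra_simps)
      then show ?thesis using a t0 t2 using LHS by linarith
    next
      case False2: False
      have a: "q * ?E \<le> 1 / sqrt u * exp (Z/2)" using q2 q0 e2 u by (intro mult_mono) auto
      show ?thesis
      proof (cases "u \<le> \<nu>\<^sup>2")
        case True
        have "1 / sqrt u * exp (Z/2) = exp (Z/2) * (indicator {1..\<nu>\<^sup>2} u / sqrt u)"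
          using True False2 by (simp add: indicator_def)
        then show ?thesis using a t0 t1 using LHS by linarith
      next
        case False3: False
        have "\<nu> < sqrt u" using False3 nu
          by (intro real_less_rsqrt) simp
        then have "\<nu>^3 \<le> u * sqrt u" using nu u
        proof -
          have "\<nu>\<^sup>2 * \<nu> \<le> u * sqrt u" using False3 \<open>\<nu> < sqrt u\<close> nu u by (intro mult_mono) auto
          then show ?thesis by (simp add: power3_eq_cube power2_eq_square)
        qed
        then have "\<nu>^3 / sqrt u \<le> u" using u by (simp add: divide_simps)
        then have m: "min u (\<nu>^3 / sqrt u) = \<nu>^3 / sqrt u" by simp
        have "1 / sqrt u * exp (Z/2) \<le> (exp (Z/4) + exp (Z/2) / \<nu>^3) * (indicator {s..} u * min u (\<nu>^3 / sqrt u))"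
        proof -
          have "1 / sqrt u * exp (Z/2) = exp (Z/2) / \<nu>^3 * (\<nu>^3 / sqrt u)" using nu by simp
          also have "\<dots> \<le> (exp (Z/4) + exp (Z/2) / \<nu>^3) * (\<nu>^3 / sqrt u)"
            using nu u by (intro mult_right_mono) auto
          finally show ?thesis using m False u by (simp add: indicator_def)
        qed
        then show ?thesis using a t0 t2 using LHS by linarith
      qed
    qed
  qed
qed

lemma si_bound:
  fixes \<pi> g :: "real \<Rightarrow> real"
  assumes int: "set_integrable lborel {0<..} \<pi>" and g: "g \<in> borel_measurable borel"
    and bd: "\<And>u. u > 0 \<Longrightarrow> \<bar>g u\<bar> \<le> K"
  shows "set_integrable lborel {0<..} (\<lambda>u. g u * \<pi> u)"
proof -
  have K: "K \<ge> 0" using bd[of 1] by simp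
  have m: "(\<lambda>u. indicator {0<..} u *\<^sub>R \<pi> u) \<in> borel_measurable lborel"
    using int unfolding set_integrable_def by (rule borel_measurable_integrable)
  have eq: "(\<lambda>u. indicator {0<..} u *\<^sub>R (g u * \<pi> u)) = (\<lambda>u. g u * (indicator {0<..} u *\<^sub>R \<pi> u))"
    by (auto simp: fun_eq_iff)
  show ?thesis unfolding set_integrable_def
  proof (rule Bochner_Integration.integrable_bound[where f="\<lambda>u. K * (indicator {0<..} u *\<^sub>R \<pi> u)"])
    show "integrable lborel (\<lambda>u. K * (indicator {0<..} u *\<^sub>R \<pi> u))"
      using int unfolding set_integrable_def by (rule integrable_mult_right)
    have "g \<in> borel_measurable lborel" using g by simp
    then show "(\<lambda>u. indicator {0<..} u *\<^sub>R (g u * \<pi> u)) \<in> borel_measurable lborel"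
      unfolding eq using m by (rule borel_measurable_times)
    show "AE u in lborel. norm (indicator {0<..} u *\<^sub>R (g u * \<pi> u)) \<le> norm (K * (indicator {0<..} u *\<^sub>R \<pi> u))"
    proof (rule AE_I2)
      fix u :: real
      show "norm (indicator {0<..} u *\<^sub>R (g u * \<pi> u)) \<le> norm (K * (indicator {0<..} u *\<^sub>R \<pi> u))"
      proof (cases "u > 0")
        case True
        then have "\<bar>g u\<bar> * \<bar>\<pi> u\<bar> \<le> K * \<bar>\<pi> u\<bar>" using bd by (intro mult_right_mono) auto
        then show ?thesis using True K by (simp add: abs_mult)
      qed simp
    qed
  qed
qed

lemma set_int_shift:
  fixes f :: "real \<Rightarrow> real" and A :: "real set"
  assumes "A \<subseteq> {0<..}"
  shows "(LBINT u:A. f u) = (LBINT u:{0<..}. indicator A u * f u)"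
  unfolding set_lebesgue_integral_def using assms
  by (intro Bochner_Integration.integral_cong) (auto simp: indicator_def)

lemma det_bound:
  fixes \<pi> :: "real \<Rightarrow> real" and c \<nu> s C \<alpha> Z x :: real
  assumes dens: "is_density_pos \<pi>" and cpos: "c > 0" and c2: "(LBINT u:{0..1}. \<pi> u) \<ge> c"
    and nu: "\<nu> \<ge> 1" and s: "0 < s" "s \<le> 1"
    and c3: "(LBINT u:{s..}. min u (\<nu> ^ 3 / sqrt u) * \<pi> u) + \<nu> * (LBINT u:{1..\<nu>\<^sup>2}. \<pi> u / sqrt u) \<le> C * s"
    and Z: "0 \<le> Z" "x\<^sup>2 \<le> Z" and al: "\<alpha> > 0"
    and key: "s * exp (Z * s / 2) + (exp (Z/4) + exp (Z/2) / \<nu>^3 + exp (Z/2) / \<nu>) * (C * s) < \<alpha> * c / sqrt 2"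
  shows "m_x \<pi> x < \<alpha>"
proof -
  have pnn: "\<And>u. u > 0 \<Longrightarrow> \<pi> u \<ge> 0" and int: "set_integrable lborel {0<..} \<pi>"
    and one: "(LBINT u:{0<..}. \<pi> u) = 1" using dens unfolding is_density_pos_def by auto
  define gN where "gN u = u * (1 + u) powr (-3/2) * exp (x\<^sup>2 / 2 * (u / (1 + u)))" for u
  define gD where "gD u = (1 + u) powr (-1/2) * exp (x\<^sup>2 / 2 * (u / (1 + u)))" for u
  define N where "N = (LBINT u:{0<..}. gN u * \<pi> u)"
  define D where "D = (LBINT u:{0<..}. gD u * \<pi> u)"
  have mx: "m_x \<pi> x = N / D" unfolding m_x_def N_def D_def gN_def gD_def by simp
  have frac: "0 \<le> u / (1+u) \<and> u / (1+u) \<le> 1" if u: "u > 0" for u :: real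
  proof -
    have "1 + u > 0" using u by simp
    then show ?thesis using u by (simp add: pos_divide_le_eq)
  qed
  have eb: "\<And>u. u > 0 \<Longrightarrow> exp (x\<^sup>2 / 2 * (u / (1 + u))) \<le> exp (x\<^sup>2 / 2)"
  proof -
    fix u :: real assume u: "u > 0"
    have "x\<^sup>2/2*(u/(1+u)) \<le> x\<^sup>2/2" by (rule mult_left_le) (use frac[OF u] in auto)
    then show "exp (x\<^sup>2 / 2 * (u / (1 + u))) \<le> exp (x\<^sup>2 / 2)" by simp
  qed
  have iD: "set_integrable lborel {0<..} (\<lambda>u. gD u * \<pi> u)"
  proof (rule si_bound[OF int, where K="exp (x\<^sup>2/2)"])
    show "gD \<in> borel_measurable borel" unfolding gD_def by measurable
    fix u :: real assume u: "u > 0"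
    have "(1 + u) powr (-1/2) \<le> 1" using u powr_m12[of "1+u"] by simp
    moreover have "(1 + u) powr (-1/2) \<ge> 0" by simp
    ultimately have "(1 + u) powr (-1/2) * exp (x\<^sup>2 / 2 * (u / (1 + u))) \<le> exp (x\<^sup>2 / 2 * (u / (1 + u)))"
      by (intro mult_left_le_one_le) auto
    moreover have "\<bar>(1 + u) powr (-1/2) * exp (x\<^sup>2 / 2 * (u / (1 + u)))\<bar> = (1 + u) powr (-1/2) * exp (x\<^sup>2 / 2 * (u / (1 + u)))"
      using \<open>(1 + u) powr (-1/2) \<ge> 0\<close> by (intro abs_of_nonneg mult_nonneg_nonneg) auto
    ultimately show "\<bar>gD u\<bar> \<le> exp (x\<^sup>2/2)" unfolding gD_def using eb[OF u] by linarith
  qed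
  have iN: "set_integrable lborel {0<..} (\<lambda>u. gN u * \<pi> u)"
  proof (rule si_bound[OF int, where K="exp (x\<^sup>2/2)"])
    show "gN \<in> borel_measurable borel" unfolding gN_def by measurable
    fix u :: real assume u: "u > 0"
    have "u * (1 + u) powr (-3/2) = u / ((1+u) * sqrt (1+u))" using u powr_m32[of "1+u"] by simp
    also have "\<dots> \<le> 1"
    proof -
      have "u \<le> (1+u) * sqrt (1+u)" using u mult_mono[of u "1+u" 1 "sqrt (1+u)"] by simp
      then show ?thesis using u by (simp add: divide_le_eq)
    qed
    finally have "u * (1 + u) powr (-3/2) \<le> 1" .
    moreover have "u * (1 + u) powr (-3/2) \<ge> 0" using u by simp
    ultimately have "u * (1 + u) powr (-3/2) * exp (x\<^sup>2 / 2 * (u / (1 + u))) \<le> exp (x\<^sup>2 / 2 * (u / (1 + u)))"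
      by (intro mult_left_le_one_le) auto
    moreover have "\<bar>u * (1 + u) powr (-3/2) * exp (x\<^sup>2 / 2 * (u / (1 + u)))\<bar> = u * (1 + u) powr (-3/2) * exp (x\<^sup>2 / 2 * (u / (1 + u)))"
      using u by (intro abs_of_nonneg mult_nonneg_nonneg) (auto simp del: mult_nonneg_nonneg)
    ultimately show "\<bar>gN u\<bar> \<le> exp (x\<^sup>2/2)" unfolding gN_def using eb[OF u] by linarith
  qed
  define g0 where "g0 u = indicator {..1} u / sqrt 2" for u :: real
  have i0: "set_integrable lborel {0<..} (\<lambda>u. g0 u * \<pi> u)"
    by (rule si_bound[OF int, where K=1]) (auto simp: g0_def indicator_def)
  have "(LBINT u:{0<..}. g0 u * \<pi> u) \<le> D" unfolding D_def
  proof (rule set_integral_mono[OF i0 iD])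
    fix u :: real assume "u \<in> {0<..}"
    then have u: "u > 0" by simp
    show "g0 u * \<pi> u \<le> gD u * \<pi> u"
    proof (rule mult_right_mono[OF _ pnn[OF u]])
      show "g0 u \<le> gD u"
      proof (cases "u \<le> 1")
        case True
        have "1 / sqrt 2 \<le> 1 / sqrt (1 + u)" using True u by (simp add: frac_le)
        also have "\<dots> = (1 + u) powr (-1/2)" using u powr_m12[of "1+u"] by simp
        also have "\<dots> \<le> (1 + u) powr (-1/2) * exp (x\<^sup>2 / 2 * (u / (1 + u)))"
          using frac[OF u] u mult_left_mono[of 1 "exp (x\<^sup>2 / 2 * (u / (1 + u)))" "(1 + u) powr (-1/2)"] by simp
        finally show ?thesis using True unfolding g0_def gD_def by simp
      next
        case False then show ?thesis unfolding g0_def gD_def by simp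
      qed
    qed
  qed
  moreover have "(LBINT u:{0<..}. g0 u * \<pi> u) = (LBINT u:{0..1}. \<pi> u) / sqrt 2"
  proof -
    have "(LBINT u:{0<..}. g0 u * \<pi> u) = (LBINT u:{0<..}. (1 / sqrt 2) * (indicator {..1} u * \<pi> u))"
      unfolding g0_def by simp
    also have "\<dots> = (1 / sqrt 2) * (LBINT u:{0<..}. indicator {..1} u * \<pi> u)"
      by (rule set_integral_mult_right)
    also have "(LBINT u:{0<..}. indicator {..1} u * \<pi> u) = (LBINT u:{0<..1}. \<pi> u)"
      by (subst set_int_shift[of "{0<..1}"]) (auto intro!: set_lebesgue_integral_cong simp: indicator_def)
    also have "\<dots> = (LBINT u:{0..1}. \<pi> u)"
    proof -
      have m: "(\<lambda>u. indicator {0<..} u *\<^sub>R \<pi> u) \<in> borel_measurable borel"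
        using int unfolding set_integrable_def by (simp add: borel_measurable_integrable)
      have eq1: "(\<lambda>u. indicator {0<..1} u *\<^sub>R \<pi> u) = (\<lambda>u. indicator {..1} u * (indicator {0<..} u *\<^sub>R \<pi> u))"
        by (auto simp: indicator_def fun_eq_iff)
      have m1: "(\<lambda>u. indicator {0<..1} u *\<^sub>R \<pi> u) \<in> borel_measurable borel"
        unfolding eq1 using m by measurable
      have eq2: "(\<lambda>u. indicator {0..1} u *\<^sub>R \<pi> u) = (\<lambda>u. if u = 0 then \<pi> 0 else indicator {0<..1} u *\<^sub>R \<pi> u)"
        by (auto simp: indicator_def fun_eq_iff)
      have m2: "(\<lambda>u. indicator {0..1} u *\<^sub>R \<pi> u) \<in> borel_measurable borel"
        unfolding eq2 using m1 by measurable
      have ae: "AE u in lborel. indicator {0<..1} u *\<^sub>R \<pi> u = indicator {0..1} u *\<^sub>R \<pi> u"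
        by (rule AE_I[where N="{0}"]) (auto simp: indicator_def)
      show ?thesis
        unfolding set_lebesgue_integral_def
        using m1 m2 ae by (intro integral_cong_AE) auto
    qed
    finally show ?thesis by simp
  qed
  ultimately have Dlow: "c / sqrt 2 \<le> D" using c2 divide_right_mono[of c "LBINT u:{0..1}. \<pi> u" "sqrt 2"] by simp
  define a where "a = s * exp (Z * s / 2)"
  define b where "b = exp (Z/4) + exp (Z/2) / \<nu>^3"
  define e where "e = exp (Z/2)"
  define g1 where "g1 u = indicator {s..} u * min u (\<nu>^3 / sqrt u)" for u :: real
  define g2 where "g2 u = indicator {1..\<nu>\<^sup>2} u / sqrt u" for u :: real
  have a0: "a \<ge> 0" and b0: "b \<ge> 0" and e0: "e \<ge> 0" using s nu by (auto simp: a_def b_def e_def)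
  have g1b: "\<bar>g1 u\<bar> \<le> \<nu>^3 / sqrt s" if u: "u > 0" for u
  proof (cases "s \<le> u")
    case True
    have "\<nu>^3 / sqrt u \<le> \<nu>^3 / sqrt s" using True s nu by (intro divide_left_mono) auto
    moreover have "0 \<le> min u (\<nu>^3 / sqrt u)" using u nu by simp
    ultimately show ?thesis using True unfolding g1_def by (simp add: indicator_def)
  next
    case False then show ?thesis using s nu unfolding g1_def by (simp add: indicator_def)
  qed
  have g2b: "\<bar>g2 u\<bar> \<le> 1" if u: "u > 0" for u
    using u by (auto simp: g2_def indicator_def)
  have g1m: "g1 \<in> borel_measurable borel" unfolding g1_def by measurable
  have g2m: "g2 \<in> borel_measurable borel" unfolding g2_def by measurable
  have i1: "set_integrable lborel {0<..} (\<lambda>u. g1 u * \<pi> u)" by (rule si_bound[OF int g1m g1b])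
  have i2: "set_integrable lborel {0<..} (\<lambda>u. g2 u * \<pi> u)" by (rule si_bound[OF int g2m g2b])
  have iB: "set_integrable lborel {0<..} (\<lambda>u. (a + b * g1 u + e * g2 u) * \<pi> u)"
  proof (rule si_bound[OF int, where K="a + b * (\<nu>^3 / sqrt s) + e"])
    show "(\<lambda>u. a + b * g1 u + e * g2 u) \<in> borel_measurable borel" using g1m g2m by measurable
    fix u :: real assume u: "u > 0"
    have "\<bar>b * g1 u\<bar> \<le> b * (\<nu>^3 / sqrt s)" using mult_left_mono[OF g1b[OF u] b0] b0 by (simp add: abs_mult)
    moreover have "\<bar>e * g2 u\<bar> \<le> e" using g2b[OF u] e0 by (simp add: abs_mult mult_left_le)
    ultimately show "\<bar>a + b * g1 u + e * g2 u\<bar> \<le> a + b * (\<nu>^3 / sqrt s) + e" using a0 by linarith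
  qed
  have "N \<le> (LBINT u:{0<..}. (a + b * g1 u + e * g2 u) * \<pi> u)" unfolding N_def
  proof (rule set_integral_mono[OF iN iB])
    fix u :: real assume "u \<in> {0<..}"
    then have u: "u > 0" by simp
    show "gN u * \<pi> u \<le> (a + b * g1 u + e * g2 u) * \<pi> u"
      using gN_le[OF u nu s(1) Z(2) Z(1)] pnn[OF u]
      unfolding gN_def a_def b_def e_def g1_def g2_def by (intro mult_right_mono) auto
  qed
  also have "(LBINT u:{0<..}. (a + b * g1 u + e * g2 u) * \<pi> u)
      = (LBINT u:{0<..}. a * \<pi> u + b * (g1 u * \<pi> u) + e * (g2 u * \<pi> u))"
    by (simp add: algebra_simps)
  also have "\<dots> = a * (LBINT u:{0<..}. \<pi> u) + b * (LBINT u:{0<..}. g1 u * \<pi> u) + e * (LBINT u:{0<..}. g2 u * \<pi> u)"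
    using int i1 i2 by (simp add: set_integral_add)
  also have "(LBINT u:{0<..}. g1 u * \<pi> u) = (LBINT u:{s..}. min u (\<nu> ^ 3 / sqrt u) * \<pi> u)"
    using s by (subst set_int_shift[of "{s..}"]) (auto simp: g1_def mult.assoc)
  also have "(LBINT u:{0<..}. g2 u * \<pi> u) = (LBINT u:{1..\<nu>\<^sup>2}. \<pi> u / sqrt u)"
    by (subst set_int_shift[of "{1..\<nu>\<^sup>2}"]) (auto simp: g2_def)
  finally have Nup: "N \<le> a + b * (LBINT u:{s..}. min u (\<nu> ^ 3 / sqrt u) * \<pi> u) + e * (LBINT u:{1..\<nu>\<^sup>2}. \<pi> u / sqrt u)"
    using one by simp
  define T1 where "T1 = (LBINT u:{s..}. min u (\<nu> ^ 3 / sqrt u) * \<pi> u)"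
  define T2 where "T2 = (LBINT u:{1..\<nu>\<^sup>2}. \<pi> u / sqrt u)"
  have T1: "T1 \<ge> 0" unfolding T1_def
    unfolding set_lebesgue_integral_def
    by (rule Bochner_Integration.integral_nonneg) (use s nu pnn in \<open>auto simp: indicator_def\<close>)
  have T2: "T2 \<ge> 0" unfolding T2_def
    unfolding set_lebesgue_integral_def
    by (rule Bochner_Integration.integral_nonneg) (use pnn in \<open>auto simp: indicator_def\<close>)
  have "b * T1 + e * T2 \<le> (b + e / \<nu>) * (T1 + \<nu> * T2)"
  proof -
    have "(b + e / \<nu>) * (T1 + \<nu> * T2) = b * T1 + e * T2 + (b * \<nu> * T2 + e / \<nu> * T1)"
      using nu by (simp add: algebra_simps)
    moreover have "0 \<le> b * \<nu> * T2 + e / \<nu> * T1" using b0 e0 T1 T2 nu by simp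
    ultimately show ?thesis by linarith
  qed
  also have "\<dots> \<le> (b + e / \<nu>) * (C * s)"
    using c3 b0 e0 nu unfolding T1_def T2_def by (intro mult_left_mono) auto
  finally have "N < \<alpha> * c / sqrt 2"
    using Nup key unfolding T1_def T2_def a_def b_def e_def by (simp add: algebra_simps)
  also have "\<alpha> * c / sqrt 2 \<le> \<alpha> * D" using mult_left_mono[OF Dlow, of \<alpha>] al by simp
  finally have "N < \<alpha> * D" .
  moreover have "D > 0" using Dlow cpos by (smt (verit) divide_pos_pos real_sqrt_gt_zero)
  ultimately show ?thesis unfolding mx by (simp add: divide_less_eq)
qed

lemma T1_pos:
  fixes \<pi> :: "real \<Rightarrow> real" and \<nu> s U m :: real
  assumes dens: "is_density_pos \<pi>" and nu: "\<nu> \<ge> 1" and s: "0 < s" "s \<le> 1" and U: "U \<ge> 1"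
    and m: "m > 0" and lower: "\<And>u. U \<le> u \<Longrightarrow> u \<le> U + 1 \<Longrightarrow> m \<le> \<pi> u"
  shows "0 < (LBINT u:{s..}. min u (\<nu> ^ 3 / sqrt u) * \<pi> u)"
proof -
  have pnn: "\<And>u. u > 0 \<Longrightarrow> \<pi> u \<ge> 0" and int: "set_integrable lborel {0<..} \<pi>"
    using dens unfolding is_density_pos_def by auto
  define k where "k = min U (\<nu> ^ 3 / sqrt (U + 1)) * m"
  have k: "k > 0" unfolding k_def using U nu m by simp
  define g1 where "g1 u = indicator {s..} u * min u (\<nu>^3 / sqrt u)" for u :: real
  have g1b: "\<bar>g1 u\<bar> \<le> \<nu>^3 / sqrt s" if u: "u > 0" for u
  proof (cases "s \<le> u")
    case True
    have "\<nu>^3 / sqrt u \<le> \<nu>^3 / sqrt s" using True s nu by (intro divide_left_mono) auto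
    moreover have "0 \<le> min u (\<nu>^3 / sqrt u)" using u nu by simp
    ultimately show ?thesis using True unfolding g1_def by (simp add: indicator_def)
  next
    case False then show ?thesis using s nu unfolding g1_def by (simp add: indicator_def)
  qed
  have g1m: "g1 \<in> borel_measurable borel" unfolding g1_def by measurable
  have i1: "set_integrable lborel {0<..} (\<lambda>u. g1 u * \<pi> u)" by (rule si_bound[OF int g1m g1b])
  have iI: "set_integrable lborel {0<..} (\<lambda>u. k * indicator {U..U+1} u)"
  proof -
    have "integrable lborel (\<lambda>u. indicator {0<..} u *\<^sub>R indicator {U..U+1} u :: real)"
    proof -
      have "(\<lambda>u. indicator {0<..} u *\<^sub>R indicator {U..U+1} u :: real) = indicator {U..U+1}"
        using U by (auto simp: indicator_def fun_eq_iff)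
      then show ?thesis by (simp add: emeasure_lborel_Icc_eq)
    qed
    then show ?thesis unfolding set_integrable_def by (intro set_integrable_mult_right[unfolded set_integrable_def]) auto
  qed
  have eqk: "(LBINT u:{0<..}. k * indicator {U..U+1} u) = k"
  proof -
    have "(LBINT u:{0<..}. k * indicator {U..U+1} u) = k * (LBINT u:{0<..}. indicator {U..U+1} u)"
      by (rule set_integral_mult_right)
    also have "(LBINT u:{0<..}. indicator {U..U+1} u) = integral\<^sup>L lborel (indicator {U..U+1} :: real \<Rightarrow> real)"
      unfolding set_lebesgue_integral_def using U
      by (intro Bochner_Integration.integral_cong) (auto simp: indicator_def)
    also have "\<dots> = 1" by simp
    finally show ?thesis by simp
  qed
  have "(LBINT u:{0<..}. k * indicator {U..U+1} u) \<le> (LBINT u:{0<..}. g1 u * \<pi> u)"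
  proof (rule set_integral_mono[OF iI i1])
    fix u :: real assume "u \<in> {0<..}"
    then have u: "u > 0" by simp
    show "k * indicator {U..U+1} u \<le> g1 u * \<pi> u"
    proof (cases "U \<le> u \<and> u \<le> U + 1")
      case True
      have "min U (\<nu> ^ 3 / sqrt (U + 1)) \<le> min u (\<nu> ^ 3 / sqrt u)"
      proof -
        have "\<nu> ^ 3 / sqrt (U + 1) \<le> \<nu> ^ 3 / sqrt u" using True u nu by (intro divide_left_mono) auto
        then show ?thesis using True by linarith
      qed
      moreover have "g1 u = min u (\<nu>^3 / sqrt u)" using True s U unfolding g1_def by (simp add: indicator_def)
      ultimately have "k \<le> g1 u * \<pi> u" unfolding k_def using lower[of u] True U nu m
        by (intro mult_mono) auto
      then show ?thesis using True by (simp add: indicator_def)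
    next
      case False
      have "0 \<le> g1 u" unfolding g1_def using u nu by (simp add: indicator_def)
      then show ?thesis using False pnn[OF u] by (auto simp: indicator_def)
    qed
  qed
  also have "(LBINT u:{0<..}. g1 u * \<pi> u) = (LBINT u:{s..}. min u (\<nu> ^ 3 / sqrt u) * \<pi> u)"
    using s by (subst set_int_shift[of "{s..}"]) (auto simp: g1_def mult.assoc)
  finally show ?thesis using k eqk by linarith
qed


lemma asym_misc1: "\<forall>\<^sub>F t in at_right 0. 1 \<le> sqrt (ln (1/t::real))" by real_asymp
lemma asym_misc2: "\<forall>\<^sub>F t in at_right 0. 0 < (t::real) * sqrt (ln (1/t))^2" by real_asymp
lemma asym_misc3: "\<forall>\<^sub>F t in at_right 0. (t::real) * sqrt (ln (1/t))^2 \<le> 1" by real_asymp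
lemma asym_misc4: "K0 > 0 \<Longrightarrow> \<forall>\<^sub>F t in at_right 0. ln (1/t) \<le> 2 * ln (K0 / ((t::real) * sqrt (ln (1/t))))" by real_asymp

lemma tail_alg:
  fixes t V K0 Z C c \<alpha> :: real
  assumes t: "t > 0" and V: "V > 0" and Zd: "Z = 2 * ln (K0 / (t * V))" and VZ: "V \<le> sqrt Z"
    and K0: "K0 = \<alpha> * c / (2 * sqrt 2 * C)" and C: "C > 0" and c: "c > 0" and al: "\<alpha> > 0"
  shows "2 * std_normal_density (sqrt Z) / sqrt Z \<le> 8 * sqrt pi * C / (\<alpha> * c) * t"
proof -
  have K0p: "K0 > 0" unfolding K0 using C c al by simp
  have "sqrt Z > 0" using VZ V by linarith
  then have Z0: "Z \<ge> 0" by simp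
  have "exp (- Z / 2) = t * V / K0"
  proof -
    have "- Z / 2 = - ln (K0 / (t * V))" using Zd by simp
    then have "exp (- Z / 2) = inverse (exp (ln (K0 / (t * V))))" by (simp add: exp_minus)
    also have "exp (ln (K0 / (t * V))) = K0 / (t * V)" using K0p t V by simp
    finally show ?thesis by simp
  qed
  then have "2 * std_normal_density (sqrt Z) / sqrt Z = 2 / sqrt (2 * pi) * (t * V / K0) / sqrt Z"
    using Z0 by (simp add: std_normal_density_def)
  also have "\<dots> \<le> 2 / sqrt (2 * pi) * (t * V / K0) / V"
    using VZ V t K0p \<open>sqrt Z > 0\<close> by (intro divide_left_mono) auto
  also have "\<dots> = 2 / sqrt (2 * pi) * t / K0" using V by simp
  also have "\<dots> = (2 * sqrt 2 * 2 / sqrt (2 * pi)) * C / (\<alpha> * c) * t"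
    unfolding K0 using C c al by (simp add: field_simps)
  also have "\<dots> \<le> 8 * sqrt pi * C / (\<alpha> * c) * t"
  proof -
    have "2 * sqrt 2 * 2 / sqrt (2 * pi) = 4 / sqrt pi" by (simp add: real_sqrt_mult field_simps)
    also have "\<dots> \<le> 8 * sqrt pi"
    proof -
      have "sqrt pi * sqrt pi = pi" by simp
      then have "4 \<le> 8 * sqrt pi * sqrt pi" using pi_gt3 by (simp add: mult.assoc)
      then show ?thesis by (simp add: divide_le_eq)
    qed
    finally show ?thesis using C c al t by (intro mult_right_mono divide_right_mono) auto
  qed
  finally show ?thesis .
qed
lemma asym_key:
  fixes C c \<alpha> :: real
  assumes C: "C > 0" and c: "c > 0" and al: "\<alpha> > 0"
  defines "K0 \<equiv> \<alpha> * c / (2 * sqrt 2 * C)"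
  shows "\<forall>\<^sub>F t in at_right 0.
     t * sqrt (ln (1/t))^2 * exp (2 * ln (K0 / (t * sqrt (ln (1/t)))) * (t * sqrt (ln (1/t))^2) / 2)
     + (exp (2 * ln (K0 / (t * sqrt (ln (1/t)))) / 4) + exp (2 * ln (K0 / (t * sqrt (ln (1/t)))) / 2) / sqrt (ln (1/t))^3
        + exp (2 * ln (K0 / (t * sqrt (ln (1/t)))) / 2) / sqrt (ln (1/t))) * (C * (t * sqrt (ln (1/t))^2))
     < \<alpha> * c / sqrt 2"
  unfolding K0_def using C c al by real_asymp


theorem mainTheorem9:
  fixes \<pi> :: "nat \<Rightarrow> real \<Rightarrow> real" and p :: "nat \<Rightarrow> real"
    and C c \<alpha> :: real
  assumes dens: "\<And>n. is_density_pos (\<pi> n)"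
    and ppos: "\<And>n. p n > 0"
    and plim: "(\<lambda>n. p n / real n) \<longlonglongrightarrow> 0"
    and c1: "condition1 \<pi> p"
    and c2: "condition2 \<pi> c"
    and c3: "condition3 \<pi> p C"
    and alpha: "0 < \<alpha>" "\<alpha> < 1"
  shows "\<exists>\<epsilon> :: nat \<Rightarrow> real. \<epsilon> \<longlonglongrightarrow> 0 \<and>
    (\<forall>\<^sub>F n in sequentially.
       measure (density lborel std_normal_density) {x. m_x (\<pi> n) x \<ge> \<alpha>}
         \<le> 8 * sqrt pi * C / (\<alpha> * c) * (p n / real n) * (1 + \<epsilon> n))"
proof -
  define tau where "tau n = p n / real n" for n
  define V where "V t = sqrt (ln (1 / t))" for t :: real
  have cpos: "c > 0" and ev2: "\<forall>\<^sub>F n in sequentially. (LBINT u:{0..1}. \<pi> n u) \<ge> c"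
    using c2 unfolding condition2_def by auto
  have ev3: "\<forall>\<^sub>F n in sequentially.
        (LBINT u:{s_n n (p n)..}. min u (nu_n n (p n) ^ 3 / sqrt u) * \<pi> n u)
        + nu_n n (p n) * (LBINT u:{1..(nu_n n (p n))\<^sup>2}. \<pi> n u / sqrt u)
        \<le> C * s_n n (p n)"
    using c3 unfolding condition3_def by auto
  obtain C' b' K ustar :: real where C'p: "C' > 0" and b'p: "b' > 0" and us: "ustar \<ge> 1"
    and ev1: "\<forall>\<^sub>F n in sequentially. (\<forall>u\<ge>ustar. C' * \<pi> n u \<ge> tau_n n (p n) powr K * exp (- b' * u))"
  proof -
    from c1 obtain b R u0 C' b' K ustar where "C' > 0" "b' > 0" "ustar \<ge> 1"
      and ev: "\<forall>\<^sub>F n in sequentially.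
          (\<exists>L. (\<forall>u>0. \<pi> n u = L u * exp (- b * u)) \<and> unif_reg_var R u0 L) \<and>
          (\<forall>u\<ge>ustar. C' * \<pi> n u \<ge> tau_n n (p n) powr K * exp (- b' * u))"
      unfolding condition1_def by blast
    from ev have "\<forall>\<^sub>F n in sequentially. (\<forall>u\<ge>ustar. C' * \<pi> n u \<ge> tau_n n (p n) powr K * exp (- b' * u))"
      by eventually_elim blast
    then show ?thesis using that \<open>C' > 0\<close> \<open>b' > 0\<close> \<open>ustar \<ge> 1\<close> by blast
  qed
  have ev0: "\<forall>\<^sub>F n in sequentially. n \<ge> 1" by (rule eventually_ge_at_top)
  have taupos: "\<forall>\<^sub>F n in sequentially. tau n > 0"
    using ev0 by eventually_elim (use ppos in \<open>auto simp: tau_def\<close>)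
  have taulim: "filterlim tau (at_right 0) sequentially"
    using plim taupos unfolding tau_def by (intro tendsto_imp_filterlim_at_right) auto
  have ev_t: "\<forall>\<^sub>F n in sequentially. 1 \<le> V (tau n) \<and> 0 < tau n * V (tau n)^2 \<and> tau n * V (tau n)^2 \<le> 1"
  proof -
    have "\<forall>\<^sub>F t in at_right 0. 1 \<le> V t \<and> 0 < t * V t^2 \<and> t * V t^2 \<le> 1"
      using asym_misc1 asym_misc2 asym_misc3 unfolding V_def by (auto intro: eventually_conj)
    from eventually_compose_filterlim[OF this taulim] show ?thesis .
  qed
  have nu_eq: "nu_n n (p n) = V (tau n)" and s_eq: "s_n n (p n) = tau n * V (tau n)^2"
    and tau_eq: "tau_n n (p n) = tau n" for n
    unfolding nu_n_def s_n_def tau_n_def V_def tau_def by simp_all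
  have Cpos: "C > 0"
  proof (rule ccontr)
    assume "\<not> C > 0"
    then have Cle: "C \<le> 0" by simp
    have "\<forall>\<^sub>F n in sequentially. False"
      using ev1 ev3 ev_t taupos
    proof eventually_elim
      case (elim n)
      let ?t = "tau n"
      have t: "?t > 0" using elim by simp
      define m where "m = ?t powr K * exp (- b' * (ustar + 1)) / C'"
      have m: "m > 0" unfolding m_def using t C'p by simp
      have lower: "m \<le> \<pi> n u" if "ustar \<le> u" "u \<le> ustar + 1" for u
      proof -
        have "?t powr K * exp (- b' * (ustar + 1)) \<le> ?t powr K * exp (- b' * u)"
          using that b'p by (intro mult_left_mono) auto
        also have "\<dots> \<le> C' * \<pi> n u" using elim(1) that tau_eq[of n] by auto
        finally show ?thesis unfolding m_def using C'p by (simp add: divide_le_eq mult.commute)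
      qed
      have pos: "0 < (LBINT u:{?t * V ?t^2..}. min u (V ?t ^ 3 / sqrt u) * \<pi> n u)"
        using T1_pos[OF dens[of n] _ _ _ us m lower] elim(3) by auto
      have T2: "0 \<le> (LBINT u:{1..(V ?t)\<^sup>2}. \<pi> n u / sqrt u)"
        unfolding set_lebesgue_integral_def
        by (rule Bochner_Integration.integral_nonneg)
           (use dens[of n] in \<open>auto simp: indicator_def is_density_pos_def\<close>)
      have "C * (?t * V ?t^2) \<le> 0" using Cle elim(3) by (simp add: mult_nonpos_nonneg)
      moreover have "0 \<le> V ?t * (LBINT u:{1..(V ?t)\<^sup>2}. \<pi> n u / sqrt u)"
        using T2 elim(3) by simp
      ultimately show False using elim(2)[unfolded nu_eq s_eq] pos by linarith
    qed
    then show False by simp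
  qed
  define K0 where "K0 = \<alpha> * c / (2 * sqrt 2 * C)"
  have K0p: "K0 > 0" unfolding K0_def using cpos Cpos alpha by simp
  define Zf where "Zf t = 2 * ln (K0 / (t * V t))" for t
  have ev_k: "\<forall>\<^sub>F n in sequentially.
     tau n * V (tau n)^2 * exp (Zf (tau n) * (tau n * V (tau n)^2) / 2)
     + (exp (Zf (tau n) / 4) + exp (Zf (tau n) / 2) / V (tau n)^3 + exp (Zf (tau n) / 2) / V (tau n))
        * (C * (tau n * V (tau n)^2)) < \<alpha> * c / sqrt 2
     \<and> ln (1 / tau n) \<le> Zf (tau n)"
  proof -
    have "\<forall>\<^sub>F t in at_right 0.
     t * V t^2 * exp (Zf t * (t * V t^2) / 2)
     + (exp (Zf t / 4) + exp (Zf t / 2) / V t^3 + exp (Zf t / 2) / V t) * (C * (t * V t^2)) < \<alpha> * c / sqrt 2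
     \<and> ln (1 / t) \<le> Zf t"
      using asym_key[OF Cpos cpos alpha(1)] asym_misc4[OF K0p]
      unfolding Zf_def V_def K0_def by (auto intro: eventually_conj)
    from eventually_compose_filterlim[OF this taulim] show ?thesis .
  qed
  show ?thesis
  proof (intro exI[of _ "\<lambda>_. 0"] conjI)
    show "(\<lambda>_. 0 :: real) \<longlonglongrightarrow> 0" by simp
    show "\<forall>\<^sub>F n in sequentially.
       measure (density lborel std_normal_density) {x. m_x (\<pi> n) x \<ge> \<alpha>}
         \<le> 8 * sqrt pi * C / (\<alpha> * c) * (p n / real n) * (1 + 0)"
      using ev2 ev3 ev_t ev_k taupos
    proof eventually_elim
      case (elim n)
      let ?t = "tau n"
      let ?Z = "Zf ?t"
      have t: "?t > 0" using elim by simp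
      have V1: "V ?t \<ge> 1" using elim by simp
      have L1: "ln (1 / ?t) \<ge> 1"
      proof -
        have "1 \<le> sqrt (ln (1 / ?t))" using V1 unfolding V_def .
        then have "sqrt 1 \<le> sqrt (ln (1 / ?t))" by simp
        then show ?thesis by (simp only: real_sqrt_le_iff)
      qed
      have Zge: "ln (1 / ?t) \<le> ?Z" using elim by simp
      have Z0: "0 \<le> ?Z" using Zge L1 by linarith
      have VZ: "V ?t \<le> sqrt ?Z" unfolding V_def using Zge by simp
      have zpos: "sqrt ?Z > 0" using VZ V1 by linarith
      have sub: "{x. \<alpha> \<le> m_x (\<pi> n) x} \<subseteq> {x. sqrt ?Z \<le> \<bar>x\<bar>}"
      proof
        fix x assume "x \<in> {x. \<alpha> \<le> m_x (\<pi> n) x}"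
        then have ax: "\<alpha> \<le> m_x (\<pi> n) x" by simp
        show "x \<in> {x. sqrt ?Z \<le> \<bar>x\<bar>}"
        proof (rule ccontr)
          assume "x \<notin> {x. sqrt ?Z \<le> \<bar>x\<bar>}"
          then have "\<bar>x\<bar> < sqrt ?Z" by simp
          then have "\<bar>x\<bar>\<^sup>2 \<le> (sqrt ?Z)\<^sup>2" by (intro power_mono) auto
          then have x2: "x\<^sup>2 \<le> ?Z" using Z0 by simp
          have "m_x (\<pi> n) x < \<alpha>"
            by (rule det_bound[OF dens[of n] cpos elim(1) V1 _ _ elim(2)[unfolded nu_eq s_eq] Z0 x2 alpha(1)])
               (use elim(3,4) in auto)
          then show False using ax by simp
        qed
      qed
      have P: "prob_space (density lborel std_normal_density)" by (auto intro: prob_space_normal_density)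
      have meas: "{x::real. sqrt ?Z \<le> \<bar>x\<bar>} \<in> sets (density lborel std_normal_density)"
      proof -
        have "{x::real. sqrt ?Z \<le> \<bar>x\<bar>} \<in> sets borel"
          by (rule borel_closed) (auto intro!: closed_Collect_le continuous_intros)
        then show ?thesis by simp
      qed
      have "measure (density lborel std_normal_density) {x. \<alpha> \<le> m_x (\<pi> n) x}
          \<le> measure (density lborel std_normal_density) {x. sqrt ?Z \<le> \<bar>x\<bar>}"
        by (rule finite_measure.finite_measure_mono[OF prob_space.finite_measure[OF P] sub meas])
      also have "\<dots> \<le> 2 * std_normal_density (sqrt ?Z) / sqrt ?Z"
        by (rule gauss_tail[OF zpos])
      also have "\<dots> \<le> 8 * sqrt pi * C / (\<alpha> * c) * ?t"
        by (rule tail_alg[OF t _ _ VZ K0_def Cpos cpos alpha(1)]) (use V1 in \<open>auto simp: Zf_def\<close>)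
      finally show ?case unfolding tau_def by simp
    qed
  qed
qed

end
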